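(* Let $V$ be a finite-dimensional real vector space, let $\varphi\colon\mathcal{K}(V)\to A$ be a continuous translation-invariant valuation with values in a Hausdorff topological abelian group $A$, and let $X$ be a convex body of dimension $d$ in $V$. Then the function $[0,\infty)\to A$, $\lambda\mapsto\varphi(\lambda X)$, vanishes under $\Delta_{b_1}\cdots\Delta_{b_{d+1}}$ for any $b_1,\ldots,b_{d+1}\in[0,\infty)$.
   Context: A convex body is a nonempty compact convex subset of $V$; $\mathcal{K}(V)$ is the set of convex bodies with the Hausdorff metric topology; the dimension of a convex body is the dimension of its affine hull. A valuation satisfies $\varphi(B\cup C)=\varphi(B)+\varphi(C)-\varphi(B\cap C)$ whenever $B,C,B\cup C\in\mathcal{K}(V)$. For $u\in[0,\infty)$ and $h\colon[0,\infty)\to A$, $(\Delta_u h)(a)=h(a+u)-h(a)$. *)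

theory Defs
  imports "HOL-Analysis.Analysis"
begin

definition convex_bodies :: "'v::euclidean_space set set" where
  "convex_bodies = {K. K \<noteq> {} \<and> compact K \<and> convex K}"

definition hausdorff_dist :: "'v::euclidean_space set \<Rightarrow> 'v set \<Rightarrow> real" where
  "hausdorff_dist K L =
     max (SUP x\<in>K. setdist {x} L) (SUP y\<in>L. setdist {y} K)"

definition continuous_on_bodies :: "('v::euclidean_space set \<Rightarrow> 'a::topological_space) \<Rightarrow> bool" where
  "continuous_on_bodies \<phi> \<longleftrightarrow>
     (\<forall>K\<in>convex_bodies. \<forall>U. open U \<and> \<phi> K \<in> U \<longrightarrow>
        (\<exists>e>0. \<forall>L\<in>convex_bodies. hausdorff_dist K L < e \<longrightarrow> \<phi> L \<in> U))"

definition is_valuation :: "('v::euclidean_space set \<Rightarrow> 'a::ab_group_add) \<Rightarrow> bool" where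
  "is_valuation \<phi> \<longleftrightarrow>
     (\<forall>B C. B \<in> convex_bodies \<and> C \<in> convex_bodies \<and> B \<union> C \<in> convex_bodies \<longrightarrow>
        \<phi> (B \<union> C) = \<phi> B + \<phi> C - \<phi> (B \<inter> C))"

definition translation_invariant :: "('v::euclidean_space set \<Rightarrow> 'a) \<Rightarrow> bool" where
  "translation_invariant \<phi> \<longleftrightarrow>
     (\<forall>K\<in>convex_bodies. \<forall>x. \<phi> ((\<lambda>y. x + y) ` K) = \<phi> K)"

text \<open>Difference operator: (\<Delta>_u h)(a) = h(a+u) - h(a). Functions on [0,\<infinity>) are
  represented as functions on real, only evaluated at nonnegative arguments.\<close>
definition diff_op :: "real \<Rightarrow> (real \<Rightarrow> 'a::ab_group_add) \<Rightarrow> real \<Rightarrow> 'a" where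
  "diff_op u h = (\<lambda>a. h (a + u) - h a)"

definition diff_ops :: "real list \<Rightarrow> (real \<Rightarrow> 'a::ab_group_add) \<Rightarrow> real \<Rightarrow> 'a" where
  "diff_ops bs h = foldr diff_op bs h"

end

theory Submission
  imports Defs
begin

lemma diff_ops_Nil[simp]: "diff_ops [] h = h"
  by (simp add: diff_ops_def)

lemma diff_ops_Cons: "diff_ops (b # bs) h a = diff_ops bs h (a + b) - diff_ops bs h a"
  by (simp add: diff_ops_def diff_op_def)

lemma diff_ops_snoc: "diff_ops (bs @ [r]) h = diff_ops bs (diff_op r h)"
  by (simp add: diff_ops_def)

lemma diff_ops_cong:
  assumes "\<forall>t\<ge>0. f t = g t" "\<forall>b\<in>set bs. b \<ge> 0" "a \<ge> 0"
  shows "diff_ops bs f a = diff_ops bs g a"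
  using assms(2,3)
proof (induction bs arbitrary: a)
  case Nil then show ?case using assms(1) by simp
next
  case (Cons b bs) then show ?case by (simp add: diff_ops_Cons)
qed

lemma diff_ops_lin:
  "diff_ops bs (\<lambda>t. f t + g t - k t) a = diff_ops bs f a + diff_ops bs g a - diff_ops bs k a"
proof (induction bs arbitrary: a)
  case Nil then show ?case by simp
next
  case (Cons b bs) then show ?case by (simp add: diff_ops_Cons algebra_simps)
qed

lemma diff_ops_const: "bs \<noteq> [] \<Longrightarrow> diff_ops bs (\<lambda>_. c) a = 0"
proof (induction bs arbitrary: a)
  case Nil then show ?case by simp
next
  case (Cons b bs) then show ?case by (cases "bs = []") (auto simp: diff_ops_Cons)
qed

lemma diff_ops_tendsto:
  fixes f :: "nat \<Rightarrow> real \<Rightarrow> 'a::topological_ab_group_add"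
  assumes "\<forall>t\<ge>0. (\<lambda>n. f n t) \<longlonglongrightarrow> g t" "\<forall>b\<in>set bs. b \<ge> 0" "a \<ge> 0"
  shows "(\<lambda>n. diff_ops bs (f n) a) \<longlonglongrightarrow> diff_ops bs g a"
  using assms(2,3)
proof (induction bs arbitrary: a)
  case Nil then show ?case using assms(1) by simp
next
  case (Cons b bs) then show ?case by (simp add: diff_ops_Cons tendsto_diff)
qed

definition msum :: "'v::euclidean_space set \<Rightarrow> 'v set \<Rightarrow> 'v set" where
  "msum K Y = {x + y | x y. x \<in> K \<and> y \<in> Y}"

lemma msum_body: "K \<in> convex_bodies \<Longrightarrow> Y \<in> convex_bodies \<Longrightarrow> msum K Y \<in> convex_bodies"
proof -
  assume K: "K \<in> convex_bodies" and Y: "Y \<in> convex_bodies"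
  have "msum K Y = (\<Union>x\<in> K. \<Union>y \<in> Y. {x + y})" unfolding msum_def by auto
  then have "convex (msum K Y)" using K Y convex_sums by (auto simp: convex_bodies_def)
  moreover have "compact (msum K Y)" using K Y compact_sums unfolding msum_def convex_bodies_def by auto
  moreover have "msum K Y \<noteq> {}" using K Y unfolding msum_def convex_bodies_def by blast
  ultimately show ?thesis by (simp add: convex_bodies_def)
qed

lemma scale_body: "K \<in> convex_bodies \<Longrightarrow> (\<lambda>x. t *\<^sub>R x) ` K \<in> convex_bodies"
  by (auto simp: convex_bodies_def compact_scaling convex_scaling)

lemma transl_body: "K \<in> convex_bodies \<Longrightarrow> (\<lambda>y. x + y) ` K \<in> convex_bodies"
  by (auto simp: convex_bodies_def compact_translation convex_translation)

lemma segment_meet: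
  fixes K1 K2 :: "'v::euclidean_space set"
  assumes "closed K1" "closed K2" "convex (K1 \<union> K2)" "k1 \<in> K1" "k2 \<in> K2"
  shows "\<exists>u. 0 \<le> u \<and> u \<le> 1 \<and> (1 - u) *\<^sub>R k1 + u *\<^sub>R k2 \<in> K1 \<inter> K2"
proof -
  have sub: "closed_segment k1 k2 \<subseteq> K1 \<union> K2"
    using assms(4,5) by (intro closed_segment_subset assms(3)) auto
  have conn: "connected (closed_segment k1 k2)" by (rule connected_segment)
  have nc: "\<not> (\<exists>e1 e2. closed e1 \<and> closed e2 \<and> closed_segment k1 k2 \<subseteq> e1 \<union> e2 \<and>
      e1 \<inter> e2 \<inter> closed_segment k1 k2 = {} \<and> e1 \<inter> closed_segment k1 k2 \<noteq> {} \<and> e2 \<inter> closed_segment k1 k2 \<noteq> {})"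
    using conn connected_closed by blast
  have "K1 \<inter> K2 \<inter> closed_segment k1 k2 \<noteq> {}"
  proof
    assume e: "K1 \<inter> K2 \<inter> closed_segment k1 k2 = {}"
    have "k1 \<in> K1 \<inter> closed_segment k1 k2" using assms(4) by simp
    then have n1: "K1 \<inter> closed_segment k1 k2 \<noteq> {}" by (rule ex_in_conv[THEN iffD1, OF exI])
    have "k2 \<in> K2 \<inter> closed_segment k1 k2" using assms(5) by simp
    then have n2: "K2 \<inter> closed_segment k1 k2 \<noteq> {}" by (rule ex_in_conv[THEN iffD1, OF exI])
    show False using n1 n2 nc assms(1,2) sub e by blast
  qed
  then obtain z where z: "z \<in> K1 \<inter> K2" "z \<in> closed_segment k1 k2" by blast
  then obtain u where "0 \<le> u" "u \<le> 1" "z = (1 - u) *\<^sub>R k1 + u *\<^sub>R k2"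
    unfolding closed_segment_def by blast
  then show ?thesis using z by blast
qed

lemma msum_Int:
  fixes K1 K2 Y :: "'v::euclidean_space set"
  assumes "closed K1" "closed K2" "convex (K1 \<union> K2)" "convex Y"
  shows "msum (K1 \<inter> K2) Y = msum K1 Y \<inter> msum K2 Y"
proof
  show "msum (K1 \<inter> K2) Y \<subseteq> msum K1 Y \<inter> msum K2 Y" unfolding msum_def by blast
next
  show "msum K1 Y \<inter> msum K2 Y \<subseteq> msum (K1 \<inter> K2) Y"
  proof
    fix x assume "x \<in> msum K1 Y \<inter> msum K2 Y"
    then obtain k1 y1 k2 y2 where h: "k1 \<in> K1" "y1 \<in> Y" "k2 \<in> K2" "y2 \<in> Y" "x = k1 + y1" "x = k2 + y2"
      unfolding msum_def by blast
    obtain u where u: "0 \<le> u" "u \<le> 1" "(1 - u) *\<^sub>R k1 + u *\<^sub>R k2 \<in> K1 \<inter> K2"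
      using segment_meet[OF assms(1-3) h(1,3)] by blast
    have y: "(1 - u) *\<^sub>R y1 + u *\<^sub>R y2 \<in> Y"
      using assms(4) h u by (simp add: convex_def)
    have "x = (1 - u) *\<^sub>R x + u *\<^sub>R x" by (simp add: algebra_simps)
    also have "\<dots> = ((1 - u) *\<^sub>R k1 + u *\<^sub>R k2) + ((1 - u) *\<^sub>R y1 + u *\<^sub>R y2)"
      using h(5,6) by (metis (no_types, lifting) add.assoc add.left_commute scaleR_right_distrib)
    finally show "x \<in> msum (K1 \<inter> K2) Y" using u y unfolding msum_def by blast
  qed
qed

lemma msum_Un: "msum (K1 \<union> K2) Y = msum K1 Y \<union> msum K2 Y"
  unfolding msum_def by blast

lemma body_Int_nonempty:
  assumes "B \<in> convex_bodies" "C \<in> convex_bodies" "B \<union> C \<in> convex_bodies"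
  shows "B \<inter> C \<in> convex_bodies"
proof -
  obtain b c where "b \<in> B" "c \<in> C" using assms unfolding convex_bodies_def by blast
  then have "B \<inter> C \<noteq> {}"
    using segment_meet[of B C b c] assms by (auto simp: convex_bodies_def compact_imp_closed)
  then show ?thesis using assms
    by (auto simp: convex_bodies_def compact_Int compact_imp_closed convex_Int)
qed

lemma derived_valuation:
  fixes \<phi> :: "'v::euclidean_space set \<Rightarrow> 'a::ab_group_add"
  assumes val: "is_valuation \<phi>" and ti: "translation_invariant \<phi>" and Y: "Y \<in> convex_bodies"
  defines "\<psi> \<equiv> (\<lambda>K. \<phi> (msum K Y) - \<phi> K)"
  shows "is_valuation \<psi>" "translation_invariant \<psi>"
proof -
  show "is_valuation \<psi>"
    unfolding is_valuation_def
  proof (intro allI impI)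
    fix B C :: "'v set"
    assume h: "B \<in> convex_bodies \<and> C \<in> convex_bodies \<and> B \<union> C \<in> convex_bodies"
    have V: "\<And>B C. B \<in> convex_bodies \<Longrightarrow> C \<in> convex_bodies \<Longrightarrow> B \<union> C \<in> convex_bodies \<Longrightarrow>
       \<phi> (B \<union> C) = \<phi> B + \<phi> C - \<phi> (B \<inter> C)" using val unfolding is_valuation_def by blast
    have e1: "\<phi> (B \<union> C) = \<phi> B + \<phi> C - \<phi> (B \<inter> C)" using V h by blast
    have mU: "msum B Y \<union> msum C Y \<in> convex_bodies" using msum_body h Y unfolding msum_Un[symmetric] by blast
    have mB: "msum B Y \<in> convex_bodies" "msum C Y \<in> convex_bodies" using msum_body h Y by blast+
    have "msum (B \<inter> C) Y = msum B Y \<inter> msum C Y"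
      using h Y msum_Int[of B C Y] by (auto simp: convex_bodies_def compact_imp_closed)
    moreover have "\<phi> (msum B Y \<union> msum C Y) = \<phi> (msum B Y) + \<phi> (msum C Y) - \<phi> (msum B Y \<inter> msum C Y)"
      by (rule V[OF mB mU])
    ultimately show "\<psi> (B \<union> C) = \<psi> B + \<psi> C - \<psi> (B \<inter> C)"
      unfolding \<psi>_def msum_Un e1 by (simp add: algebra_simps)
  qed
  show "translation_invariant \<psi>"
    unfolding translation_invariant_def
  proof (intro ballI allI)
    fix K :: "'v set" and x assume K: "K \<in> convex_bodies"
    have "msum ((\<lambda>y. x + y) ` K) Y = (\<lambda>y. x + y) ` msum K Y"
    proof (rule set_eqI, rule iffI)
      fix z assume "z \<in> msum ((\<lambda>y. x + y) ` K) Y"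
      then obtain k y where "k \<in> K" "y \<in> Y" "z = (x + k) + y" unfolding msum_def by blast
      then show "z \<in> (\<lambda>y. x + y) ` msum K Y" unfolding msum_def by (auto simp: add.assoc)
    next
      fix z assume "z \<in> (\<lambda>y. x + y) ` msum K Y"
      then obtain k y where "k \<in> K" "y \<in> Y" "z = x + (k + y)" unfolding msum_def by blast
      then have "z = (x + k) + y" "x + k \<in> (\<lambda>y. x + y) ` K" by (auto simp: add.assoc)
      then show "z \<in> msum ((\<lambda>y. x + y) ` K) Y" unfolding msum_def using \<open>y \<in> Y\<close> by blast
    qed
    then show "\<psi> ((\<lambda>y. x + y) ` K) = \<psi> K"
      using ti K msum_body[OF K Y] unfolding \<psi>_def translation_invariant_def by simp
  qed
qed

definition good :: "('v::euclidean_space set \<Rightarrow> 'a::ab_group_add) \<Rightarrow> nat \<Rightarrow> 'v set \<Rightarrow> bool" where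
  "good \<phi> d P \<longleftrightarrow> (\<forall>bs a. length bs > d \<longrightarrow> (\<forall>b\<in>set bs. b \<ge> 0) \<longrightarrow> a \<ge> 0 \<longrightarrow>
      diff_ops bs (\<lambda>t. \<phi> ((\<lambda>x. t *\<^sub>R x) ` P)) a = 0)"

lemma good_mono: "good \<phi> d P \<Longrightarrow> d \<le> d' \<Longrightarrow> good \<phi> d' P"
  unfolding good_def by auto

lemma good_const:
  assumes "\<And>t. \<phi> ((\<lambda>x. t *\<^sub>R x) ` P) = c"
  shows "good \<phi> d P"
  unfolding good_def
proof (intro allI impI)
  fix bs :: "real list" and a :: real assume "length bs > d"
  then have "bs \<noteq> []" by auto
  then show "diff_ops bs (\<lambda>t. \<phi> ((\<lambda>x. t *\<^sub>R x) ` P)) a = 0"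
    using diff_ops_const[of bs c a] assms by simp
qed

lemma good_empty: "good \<phi> d {}"
  by (rule good_const[where c="\<phi> {}"]) simp

lemma good_sing:
  fixes \<phi> :: "'v::euclidean_space set \<Rightarrow> 'a::ab_group_add"
  assumes ti: "translation_invariant \<phi>"
  shows "good \<phi> d {p}"
proof (rule good_const[where c="\<phi> {0}"])
  fix t :: real
  have b0: "{0::'v} \<in> convex_bodies" by (simp add: convex_bodies_def)
  have "(\<lambda>x. t *\<^sub>R x) ` {p} = (\<lambda>y. t *\<^sub>R p + y) ` {0}" by (simp only: image_insert image_empty add_0_right)
  then show "\<phi> ((\<lambda>x. t *\<^sub>R x) ` {p}) = \<phi> {0}"
    using ti b0 unfolding translation_invariant_def by metis
qed

lemma good_translate:
  assumes ti: "translation_invariant \<phi>" and Y: "Y \<in> convex_bodies" and g: "good \<phi> d Y"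
  shows "good \<phi> d ((\<lambda>x. w + x) ` Y)"
proof -
  have "\<phi> ((\<lambda>x. t *\<^sub>R x) ` ((\<lambda>x. w + x) ` Y)) = \<phi> ((\<lambda>x. t *\<^sub>R x) ` Y)" for t
  proof -
    have "(\<lambda>x. t *\<^sub>R x) ` ((\<lambda>x. w + x) ` Y) = (\<lambda>y. t *\<^sub>R w + y) ` ((\<lambda>x. t *\<^sub>R x) ` Y)"
      by (auto simp: image_image scaleR_right_distrib)
    then show ?thesis using ti scale_body[OF Y] unfolding translation_invariant_def by metis
  qed
  then show ?thesis using g unfolding good_def by simp
qed

lemma polytope_body: "polytope P \<Longrightarrow> P \<noteq> {} \<Longrightarrow> P \<in> convex_bodies"
  by (simp add: convex_bodies_def polytope_imp_compact polytope_imp_convex)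

lemma scale_nonempty: "(S::'v::real_vector set) \<noteq> {} \<Longrightarrow> (\<lambda>x. (0::real) *\<^sub>R x) ` S = {0}"
  by (simp add: image_constant_conv)

lemma good_cut:
  fixes \<phi> :: "'v::euclidean_space set \<Rightarrow> 'a::ab_group_add"
  assumes ti: "translation_invariant \<phi>" and val: "is_valuation \<phi>"
    and IH: "\<forall>Q. polytope Q \<and> aff_dim Q \<le> int n \<longrightarrow> good \<phi> n Q"
    and P: "polytope P" "aff_dim P \<le> int (Suc n)"
    and g1: "good \<phi> (Suc n) (P \<inter> {x. w \<bullet> x \<le> e})"
    and g2: "good \<phi> (Suc n) (P \<inter> {x. w \<bullet> x \<ge> e})"
  shows "good \<phi> (Suc n) P"
proof -
  define P1 where "P1 = P \<inter> {x. w \<bullet> x \<le> e}"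
  define P2 where "P2 = P \<inter> {x. w \<bullet> x \<ge> e}"
  define P0 where "P0 = P \<inter> {x. w \<bullet> x = e}"
  have U: "P = P1 \<union> P2" unfolding P1_def P2_def by auto
  have I: "P1 \<inter> P2 = P0" unfolding P1_def P2_def P0_def by auto
  show ?thesis
  proof (cases "P1 = {} \<or> P2 = {} \<or> P \<subseteq> {x. w \<bullet> x = e}")
    case True
    have c1: "P = P2" if "P1 = {}" using U that by simp
    have c2: "P = P1" if "P2 = {}" using U that by simp
    have c3: "P = P1" if "P \<subseteq> {x. w \<bullet> x = e}" using that unfolding P1_def by auto
    show ?thesis
    proof (cases "P = P2")
      case True then show ?thesis using g2 P2_def by simp
    next
      case False
      then have "P = P1" using c1 c2 c3 \<open>P1 = {} \<or> P2 = {} \<or> P \<subseteq> {x. w \<bullet> x = e}\<close> by argo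
      then show ?thesis using g1 P1_def by simp
    qed
  next
    case False
    then have ne: "P1 \<noteq> {}" "P2 \<noteq> {}" and nsub: "\<not> P \<subseteq> {x. w \<bullet> x = e}" by auto
    have cl: "closed P1" "closed P2" unfolding P1_def P2_def
      using P polytope_imp_closed closed_halfspace_le closed_halfspace_ge by (auto intro!: closed_Int)
    have cvx: "convex P" using P polytope_imp_convex by auto
    obtain p1 p2 where "p1 \<in> P1" "p2 \<in> P2" using ne by blast
    then have P0ne: "P0 \<noteq> {}" using segment_meet[OF cl, of p1 p2] cvx U I by auto
    have "affine hull P0 \<subseteq> {x. w \<bullet> x = e}"
      by (rule hull_minimal) (auto simp: P0_def affine_hyperplane)
    moreover obtain p where "p \<in> P" "w \<bullet> p \<noteq> e" using nsub by blast
    ultimately have "affine hull P0 \<subset> affine hull P"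
      using hull_mono[of P0 P] hull_inc[of p P] unfolding P0_def by blast
    then have "aff_dim P0 < aff_dim P" by (rule aff_dim_psubset)
    then have ad: "aff_dim P0 \<le> int n" using P by linarith
    have pP0: "polytope P0" unfolding P0_def using P polytope_Int_polyhedron polyhedron_hyperplane by blast
    have "good \<phi> n P0" using IH ad pP0 by blast
    then have g0: "good \<phi> (Suc n) P0" by (rule good_mono) simp
    have pol1: "polytope P1" unfolding P1_def
      using P polytope_Int_polyhedron polyhedron_halfspace_le by blast
    have pol2: "polytope P2" unfolding P2_def
      using P polytope_Int_polyhedron polyhedron_halfspace_ge by blast
    have bP1: "P1 \<in> convex_bodies" by (rule polytope_body[OF pol1 ne(1)])
    have bP2: "P2 \<in> convex_bodies" by (rule polytope_body[OF pol2 ne(2)])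
    have bP: "P \<in> convex_bodies" by (rule polytope_body[OF P(1)]) (use U ne in auto)
    have V: "\<And>B C. B \<in> convex_bodies \<Longrightarrow> C \<in> convex_bodies \<Longrightarrow> B \<union> C \<in> convex_bodies \<Longrightarrow>
       \<phi> (B \<union> C) = \<phi> B + \<phi> C - \<phi> (B \<inter> C)" using val unfolding is_valuation_def by blast
    have eq: "\<phi> ((\<lambda>x. t *\<^sub>R x) ` P) = \<phi> ((\<lambda>x. t *\<^sub>R x) ` P1) + \<phi> ((\<lambda>x. t *\<^sub>R x) ` P2) - \<phi> ((\<lambda>x. t *\<^sub>R x) ` P0)" for t
    proof (cases "t = 0")
      case True
      have e1: "(\<lambda>x. t *\<^sub>R x) ` S = {0}" if "S \<noteq> {}" for S :: "'v set"
        using that True by (simp add: image_constant_conv)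
      have "P \<noteq> {}" using U ne by auto
      then show ?thesis using ne P0ne e1 by simp
    next
      case False
      have inj: "inj (\<lambda>x::'v. t *\<^sub>R x)" using False by (simp add: inj_on_def)
      have b1: "(\<lambda>x. t *\<^sub>R x) ` P1 \<in> convex_bodies" by (rule scale_body[OF bP1])
      have b2: "(\<lambda>x. t *\<^sub>R x) ` P2 \<in> convex_bodies" by (rule scale_body[OF bP2])
      have un: "(\<lambda>x. t *\<^sub>R x) ` P1 \<union> (\<lambda>x. t *\<^sub>R x) ` P2 = (\<lambda>x. t *\<^sub>R x) ` P"
        unfolding U by (rule image_Un[symmetric])
      have b3: "(\<lambda>x. t *\<^sub>R x) ` P1 \<union> (\<lambda>x. t *\<^sub>R x) ` P2 \<in> convex_bodies"
        unfolding un by (rule scale_body[OF bP])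
      have it: "(\<lambda>x. t *\<^sub>R x) ` P1 \<inter> (\<lambda>x. t *\<^sub>R x) ` P2 = (\<lambda>x. t *\<^sub>R x) ` P0"
        unfolding I[symmetric] by (rule image_Int[OF inj, symmetric])
      show ?thesis using V[OF b1 b2 b3] unfolding un it .
    qed
    show ?thesis unfolding good_def
    proof (intro allI impI)
      fix bs :: "real list" and a :: real
      assume h: "length bs > Suc n" "\<forall>b\<in>set bs. b \<ge> 0" "a \<ge> 0"
      have "diff_ops bs (\<lambda>t. \<phi> ((\<lambda>x. t *\<^sub>R x) ` P)) a =
        diff_ops bs (\<lambda>t. \<phi> ((\<lambda>x. t *\<^sub>R x) ` P1)) a + diff_ops bs (\<lambda>t. \<phi> ((\<lambda>x. t *\<^sub>R x) ` P2)) a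
         - diff_ops bs (\<lambda>t. \<phi> ((\<lambda>x. t *\<^sub>R x) ` P0)) a"
        by (subst eq) (rule diff_ops_lin)
      also have "\<dots> = 0" using g1 g2 g0 h unfolding good_def P1_def[symmetric] P2_def[symmetric] by simp
      finally show "diff_ops bs (\<lambda>t. \<phi> ((\<lambda>x. t *\<^sub>R x) ` P)) a = 0" .
    qed
  qed
qed

fun cells :: "('v::euclidean_space \<times> real) list \<Rightarrow> 'v set set" where
  "cells [] = {UNIV}"
| "cells (h # hs) = (\<lambda>C. {x. fst h \<bullet> x \<le> snd h} \<inter> C) ` cells hs \<union> (\<lambda>C. {x. fst h \<bullet> x \<ge> snd h} \<inter> C) ` cells hs"

lemma good_cells:
  fixes \<phi> :: "'v::euclidean_space set \<Rightarrow> 'a::ab_group_add"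
  assumes ti: "translation_invariant \<phi>" and val: "is_valuation \<phi>"
    and IH: "\<forall>Q. polytope Q \<and> aff_dim Q \<le> int n \<longrightarrow> good \<phi> n Q"
  shows "polytope P \<Longrightarrow> aff_dim P \<le> int (Suc n) \<Longrightarrow> \<forall>C\<in>cells hs. good \<phi> (Suc n) (P \<inter> C) \<Longrightarrow> good \<phi> (Suc n) P"
proof (induction hs arbitrary: P)
  case Nil then show ?case by simp
next
  case (Cons h hs)
  obtain w e where h: "h = (w, e)" by force
  have A: "good \<phi> (Suc n) (P \<inter> {x. w \<bullet> x \<le> e})"
  proof (rule Cons.IH)
    show "polytope (P \<inter> {x. w \<bullet> x \<le> e})" using Cons.prems polytope_Int_polyhedron polyhedron_halfspace_le by blast
    show "aff_dim (P \<inter> {x. w \<bullet> x \<le> e}) \<le> int (Suc n)" using Cons.prems aff_dim_subset[of "P \<inter> {x. w \<bullet> x \<le> e}" P] by auto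
    show "\<forall>C\<in>cells hs. good \<phi> (Suc n) (P \<inter> {x. w \<bullet> x \<le> e} \<inter> C)"
      using Cons.prems(3) h by (auto simp: Int_assoc)
  qed
  have B: "good \<phi> (Suc n) (P \<inter> {x. w \<bullet> x \<ge> e})"
  proof (rule Cons.IH)
    show "polytope (P \<inter> {x. w \<bullet> x \<ge> e})" using Cons.prems polytope_Int_polyhedron polyhedron_halfspace_ge by blast
    show "aff_dim (P \<inter> {x. w \<bullet> x \<ge> e}) \<le> int (Suc n)" using Cons.prems aff_dim_subset[of "P \<inter> {x. w \<bullet> x \<ge> e}" P] by auto
    show "\<forall>C\<in>cells hs. good \<phi> (Suc n) (P \<inter> {x. w \<bullet> x \<ge> e} \<inter> C)"
      using Cons.prems(3) h by (auto simp: Int_assoc)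
  qed
  show ?case using good_cut[OF ti val IH Cons.prems(1,2) A B] .
qed

lemma cells_props:
  "C \<in> cells hs \<Longrightarrow> polyhedron C \<and> (\<forall>(w,e)\<in>set hs. C \<subseteq> {x. w \<bullet> x \<le> e} \<or> C \<subseteq> {x. w \<bullet> x \<ge> e})"
proof (induction hs arbitrary: C)
  case Nil then show ?case by simp
next
  case (Cons h hs)
  then show ?case
    by (auto simp: polyhedron_halfspace_le polyhedron_halfspace_ge split: prod.splits) blast+
qed

lemma cells_cone:
  "(\<forall>(w,e)\<in>set hs. e = w \<bullet> v) \<Longrightarrow> C \<in> cells hs \<Longrightarrow> v \<in> C \<and> (\<forall>x\<in>C. \<forall>t\<ge>0. v + t *\<^sub>R (x - v) \<in> C)"
proof (induction hs arbitrary: C)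
  case Nil then show ?case by simp
next
  case (Cons h hs)
  obtain w e where h: "h = (w, e)" by force
  have e: "e = w \<bullet> v" using Cons.prems h by auto
  have le: "w \<bullet> (v + t *\<^sub>R (x - v)) \<le> e" if "w \<bullet> x \<le> e" "t \<ge> 0" for x t
  proof -
    have "t * (w \<bullet> x - w \<bullet> v) \<le> 0" using that e by (simp add: mult_nonneg_nonpos)
    then show ?thesis using e by (simp add: inner_add_right inner_diff_right algebra_simps)
  qed
  have ge: "w \<bullet> (v + t *\<^sub>R (x - v)) \<ge> e" if "w \<bullet> x \<ge> e" "t \<ge> 0" for x t
  proof -
    have "t * (w \<bullet> x - w \<bullet> v) \<ge> 0" using that e by simp
    then show ?thesis using e by (simp add: inner_add_right inner_diff_right algebra_simps)
  qed
  show ?case using Cons.IH[of] Cons.prems le ge e h by auto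
qed

lemma pyramid_body:
  fixes B :: "'v::euclidean_space set"
  assumes B: "B \<in> convex_bodies"
    and Y: "Y = {\<tau> *\<^sub>R z | \<tau> z. 0 \<le> \<tau> \<and> \<tau> \<le> 1 \<and> z \<in> B}"
  shows "Y \<in> convex_bodies"
proof -
  have ne: "B \<noteq> {}" and cB: "convex B" and kB: "compact B" using B by (auto simp: convex_bodies_def)
  have H: "convex hull (insert 0 B) = {x. \<exists>u\<ge>0. \<exists>v\<ge>0. \<exists>b. u + v = 1 \<and> b \<in> B \<and> x = u *\<^sub>R 0 + v *\<^sub>R b}"
    using convex_hull_insert[OF ne, of 0] convex_hull_eq[THEN iffD2, OF cB] by simp
  have "x \<in> convex hull (insert 0 B) \<longleftrightarrow> x \<in> Y" for x
  proof
    assume "x \<in> convex hull (insert 0 B)"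
    then obtain u v b where h: "u \<ge> 0" "v \<ge> 0" "u + v = 1" "b \<in> B" "x = u *\<^sub>R 0 + v *\<^sub>R b"
      unfolding H by blast
    then have "0 \<le> v \<and> v \<le> 1 \<and> b \<in> B \<and> x = v *\<^sub>R b" by simp
    then show "x \<in> Y" unfolding Y by blast
  next
    assume "x \<in> Y"
    then obtain \<tau> z where h: "0 \<le> \<tau>" "\<tau> \<le> 1" "z \<in> B" "x = \<tau> *\<^sub>R z" unfolding Y by blast
    then have "1 - \<tau> \<ge> 0 \<and> \<tau> \<ge> 0 \<and> (1 - \<tau>) + \<tau> = 1 \<and> z \<in> B \<and> x = (1 - \<tau>) *\<^sub>R 0 + \<tau> *\<^sub>R z" by simp
    then show "x \<in> convex hull (insert 0 B)" unfolding H by blast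
  qed
  then have hY: "convex hull (insert 0 B) = Y" by (rule set_eqI)
  have "compact (convex hull (insert 0 B))"
    using kB by (simp add: compact_convex_hull)
  then have cY: "compact Y" unfolding hY .
  have vY: "convex Y" using convex_convex_hull[of "insert 0 B"] unfolding hY .
  obtain z where "z \<in> B" using ne by blast
  then have "\<exists>\<tau> z'. 1 *\<^sub>R z = \<tau> *\<^sub>R z' \<and> 0 \<le> \<tau> \<and> \<tau> \<le> (1::real) \<and> z' \<in> B"
    by (intro exI[of _ 1] exI[of _ z]) simp
  then have "1 *\<^sub>R z \<in> Y" unfolding Y by blast
  then have "Y \<noteq> {}" by blast
  then show ?thesis using cY vY unfolding convex_bodies_def by blast
qed

lemma good_pyramid:
  fixes \<phi> :: "'v::euclidean_space set \<Rightarrow> 'a::ab_group_add"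
  assumes ti: "translation_invariant \<phi>" and val: "is_valuation \<phi>"
    and IHB: "\<forall>\<psi>::'v set \<Rightarrow> 'a. translation_invariant \<psi> \<and> is_valuation \<psi> \<longrightarrow> good \<psi> n B"
    and B: "B \<in> convex_bodies" and g: "\<forall>z\<in>B. g \<bullet> z = 1"
    and Y: "Y = {\<tau> *\<^sub>R z | \<tau> z. 0 \<le> \<tau> \<and> \<tau> \<le> 1 \<and> z \<in> B}"
  shows "good \<phi> (Suc n) Y"
proof -
  have Yb: "Y \<in> convex_bodies" using pyramid_body[OF B Y] .
  have cB: "convex B" using B by (simp add: convex_bodies_def)
  have mkY: "\<tau> *\<^sub>R z \<in> Y" if "0 \<le> \<tau>" "\<tau> \<le> 1" "z \<in> B" for \<tau> z
    unfolding Y using that by blast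
  have getY: "\<exists>\<tau> z. 0 \<le> \<tau> \<and> \<tau> \<le> 1 \<and> z \<in> B \<and> x = \<tau> *\<^sub>R z" if "x \<in> Y" for x
    using that unfolding Y by blast
  obtain z0 where z0: "z0 \<in> B" using B unfolding convex_bodies_def by blast
  have zY: "0 \<in> Y" using mkY[of 0 z0] z0 by simp
  have BY: "z \<in> Y" if "z \<in> B" for z using mkY[of 1 z] that by simp
  have inS: "t *\<^sub>R x \<in> (\<lambda>x. t *\<^sub>R x) ` S" if "x \<in> S" for t x and S :: "'v set"
    using that by (rule imageI)
  have inM: "x + y \<in> msum K L" if "x \<in> K" "y \<in> L" for x y K L
    unfolding msum_def using that by blast
  let ?sc = "\<lambda>(t::real) S. (\<lambda>x::'v. t *\<^sub>R x) ` S"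
  have E1: "?sc (s + r) Y = ?sc s Y \<union> msum (?sc s B) (?sc r Y)" if sr: "s \<ge> 0" "r \<ge> 0" for s r
  proof
    show "?sc (s + r) Y \<subseteq> ?sc s Y \<union> msum (?sc s B) (?sc r Y)"
    proof
      fix x assume "x \<in> ?sc (s + r) Y"
      then obtain y where y: "y \<in> Y" "x = (s + r) *\<^sub>R y" by blast
      obtain \<tau> z where tz: "0 \<le> \<tau>" "\<tau> \<le> 1" "z \<in> B" "y = \<tau> *\<^sub>R z" using getY[OF y(1)] by blast
      define m where "m = (s + r) * \<tau>"
      have xm: "x = m *\<^sub>R z" using y tz m_def by simp
      have m0: "m \<ge> 0" using tz sr m_def by simp
      have m1: "m \<le> s + r" using tz sr m_def by (simp add: mult_left_le)
      show "x \<in> ?sc s Y \<union> msum (?sc s B) (?sc r Y)"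
      proof (cases "m \<le> s")
        case True
        show ?thesis
        proof (cases "s = 0")
          case True
          then have "m = 0" using \<open>m \<le> s\<close> m0 by simp
          then have "x = s *\<^sub>R 0" using xm by simp
          then show ?thesis using inS[OF zY, of s] by simp
        next
          case False
          then have "s > 0" using sr by simp
          then have "x = s *\<^sub>R ((m / s) *\<^sub>R z)" using xm by simp
          moreover have "(m / s) *\<^sub>R z \<in> Y" using mkY[of "m / s" z] tz m0 True \<open>s > 0\<close> by simp
          ultimately show ?thesis using inS[of "(m / s) *\<^sub>R z" Y s] by simp
        qed
      next
        case False
        then have r0: "r > 0" using m1 by simp
        have e: "r *\<^sub>R (((m - s) / r) *\<^sub>R z) = (m - s) *\<^sub>R z" using r0 by simp
        have "x = s *\<^sub>R z + (m - s) *\<^sub>R z" using xm by (simp add: scaleR_diff_left)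
        then have "x = s *\<^sub>R z + r *\<^sub>R (((m - s) / r) *\<^sub>R z)" by (simp only: e)
        moreover have "((m - s) / r) *\<^sub>R z \<in> Y" using mkY[of "(m - s) / r" z] tz m1 False r0 by simp
        ultimately show ?thesis using inM[OF inS[OF tz(3), of s] inS[of "((m - s) / r) *\<^sub>R z" Y r]] by simp
      qed
    qed
  next
    show "?sc s Y \<union> msum (?sc s B) (?sc r Y) \<subseteq> ?sc (s + r) Y"
    proof
      fix x assume x: "x \<in> ?sc s Y \<union> msum (?sc s B) (?sc r Y)"
      show "x \<in> ?sc (s + r) Y"
      proof (cases "x \<in> ?sc s Y")
        case True
        then obtain y where y: "y \<in> Y" "x = s *\<^sub>R y" by blast
        obtain \<tau> z where a: "0 \<le> \<tau>" "\<tau> \<le> 1" "z \<in> B" "y = \<tau> *\<^sub>R z" using getY[OF y(1)] by blast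
        show ?thesis
        proof (cases "s + r = 0")
          case True
          then have "x = (s + r) *\<^sub>R 0" using a y sr by simp
          then show ?thesis using inS[OF zY, of "s + r"] by simp
        next
          case False
          then have spos: "s + r > 0" using sr by simp
          then have "x = (s + r) *\<^sub>R ((s * \<tau> / (s + r)) *\<^sub>R z)" using a y by simp
          moreover have "s * \<tau> / (s + r) \<le> 1" using spos a sr
            by (simp add: divide_le_eq_1) (smt (verit) mult_left_le)
          then have "(s * \<tau> / (s + r)) *\<^sub>R z \<in> Y" using mkY[of "s * \<tau> / (s + r)" z] a sr spos by simp
          ultimately show ?thesis using inS[of "(s * \<tau> / (s + r)) *\<^sub>R z" Y "s + r"] by simp
        qed
      next
        case False
        then have "x \<in> msum (?sc s B) (?sc r Y)" using x by blast
        then obtain p q where pq: "p \<in> ?sc s B" "q \<in> ?sc r Y" "x = p + q" unfolding msum_def by blast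
        obtain z1 where z1: "z1 \<in> B" "p = s *\<^sub>R z1" using pq(1) by blast
        obtain y where y: "y \<in> Y" "q = r *\<^sub>R y" using pq(2) by blast
        obtain \<tau> z2 where b: "0 \<le> \<tau>" "\<tau> \<le> 1" "z2 \<in> B" "y = \<tau> *\<^sub>R z2" using getY[OF y(1)] by blast
        have xx: "x = s *\<^sub>R z1 + (r * \<tau>) *\<^sub>R z2" using pq z1 y b by simp
        define m where "m = s + r * \<tau>"
        have rt0: "r * \<tau> \<ge> 0" using sr b by simp
        have rt1: "r * \<tau> \<le> r" using sr b by (simp add: mult_left_le)
        have m0: "m \<ge> 0" using rt0 sr m_def by simp
        have m1: "m \<le> s + r" using rt1 m_def by simp
        show ?thesis
        proof (cases "m = 0")
          case True
          then have "s = 0" "r * \<tau> = 0" using sr rt0 m_def by linarith+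
          then have "x = (s + r) *\<^sub>R 0" using xx by simp
          then show ?thesis using inS[OF zY, of "s + r"] by simp
        next
          case False
          then have mpos: "m > 0" using m0 by simp
          define w where "w = (s / m) *\<^sub>R z1 + (r * \<tau> / m) *\<^sub>R z2"
          have sm: "s / m + r * \<tau> / m = 1" using mpos m_def by (simp add: add_divide_distrib[symmetric])
          have "w \<in> B" unfolding w_def
            using convexD[OF cB z1(1) b(3), of "s / m" "r * \<tau> / m"] sm sr rt0 mpos by simp
          have xw: "x = m *\<^sub>R w" unfolding w_def using xx mpos by (simp add: scaleR_add_right)
          have spos: "s + r > 0" using mpos m1 by simp
          have "x = (s + r) *\<^sub>R ((m / (s + r)) *\<^sub>R w)" using xw spos by simp
          moreover have "(m / (s + r)) *\<^sub>R w \<in> Y" using mkY[of "m / (s + r)" w] \<open>w \<in> B\<close> m0 m1 spos by simp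
          ultimately show ?thesis using inS[of "(m / (s + r)) *\<^sub>R w" Y "s + r"] by simp
        qed
      qed
    qed
  qed
  have E2: "?sc s Y \<inter> msum (?sc s B) (?sc r Y) = ?sc s B" if sr: "s \<ge> 0" "r \<ge> 0" for s r
  proof
    show "?sc s Y \<inter> msum (?sc s B) (?sc r Y) \<subseteq> ?sc s B"
    proof
      fix x assume x: "x \<in> ?sc s Y \<inter> msum (?sc s B) (?sc r Y)"
      then obtain y where y: "y \<in> Y" "x = s *\<^sub>R y" by blast
      obtain \<tau> z where a: "0 \<le> \<tau>" "\<tau> \<le> 1" "z \<in> B" "y = \<tau> *\<^sub>R z" using getY[OF y(1)] by blast
      have "x \<in> msum (?sc s B) (?sc r Y)" using x by blast
      then obtain p q where pq: "p \<in> ?sc s B" "q \<in> ?sc r Y" "x = p + q" unfolding msum_def by blast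
      obtain z1 where z1: "z1 \<in> B" "p = s *\<^sub>R z1" using pq(1) by blast
      obtain y' where y': "y' \<in> Y" "q = r *\<^sub>R y'" using pq(2) by blast
      obtain \<tau>' z2 where b: "0 \<le> \<tau>'" "\<tau>' \<le> 1" "z2 \<in> B" "y' = \<tau>' *\<^sub>R z2" using getY[OF y'(1)] by blast
      have x1: "x = (s * \<tau>) *\<^sub>R z" using y a by simp
      have x2: "x = s *\<^sub>R z1 + (r * \<tau>') *\<^sub>R z2" using pq z1 y' b by simp
      have "g \<bullet> x = s * \<tau>" using x1 g a(3) by (simp add: inner_scaleR_right)
      moreover have "g \<bullet> x = s + r * \<tau>'" using x2 g z1(1) b(3) by (simp add: inner_add_right inner_scaleR_right)
      moreover have "s * \<tau> \<le> s" using sr a by (simp add: mult_left_le)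
      moreover have "r * \<tau>' \<ge> 0" using sr b by simp
      ultimately have "r * \<tau>' = 0" by linarith
      then have "x = s *\<^sub>R z1" using x2 by simp
      then show "x \<in> ?sc s B" using inS[OF z1(1), of s] by simp
    qed
  next
    show "?sc s B \<subseteq> ?sc s Y \<inter> msum (?sc s B) (?sc r Y)"
    proof
      fix x assume "x \<in> ?sc s B"
      then obtain z where z: "z \<in> B" "x = s *\<^sub>R z" by blast
      have "x \<in> ?sc s Y" using z inS[OF BY[OF z(1)], of s] by simp
      moreover have "x = s *\<^sub>R z + r *\<^sub>R 0" using z by simp
      then have "x \<in> msum (?sc s B) (?sc r Y)" using inM[OF inS[OF z(1), of s] inS[OF zY, of r]] by simp
      ultimately show "x \<in> ?sc s Y \<inter> msum (?sc s B) (?sc r Y)" by (rule IntI)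
    qed
  qed
  have V: "\<And>B C. B \<in> convex_bodies \<Longrightarrow> C \<in> convex_bodies \<Longrightarrow> B \<union> C \<in> convex_bodies \<Longrightarrow>
     \<phi> (B \<union> C) = \<phi> B + \<phi> C - \<phi> (B \<inter> C)" using val unfolding is_valuation_def by blast
  have step: "diff_op r (\<lambda>t. \<phi> (?sc t Y)) s = \<phi> (msum (?sc s B) (?sc r Y)) - \<phi> (?sc s B)"
    if sr: "s \<ge> 0" "r \<ge> 0" for s r
  proof -
    have b1: "?sc s Y \<in> convex_bodies" by (rule scale_body[OF Yb])
    have b2: "msum (?sc s B) (?sc r Y) \<in> convex_bodies" by (rule msum_body[OF scale_body[OF B] scale_body[OF Yb]])
    have b3: "?sc s Y \<union> msum (?sc s B) (?sc r Y) \<in> convex_bodies" unfolding E1[OF sr, symmetric] by (rule scale_body[OF Yb])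
    have "\<phi> (?sc (s + r) Y) = \<phi> (?sc s Y) + \<phi> (msum (?sc s B) (?sc r Y)) - \<phi> (?sc s B)"
      using V[OF b1 b2 b3] unfolding E1[OF sr, symmetric] E2[OF sr] .
    then show ?thesis unfolding diff_op_def by (simp add: add.commute)
  qed
  show ?thesis unfolding good_def
  proof (intro allI impI)
    fix bs :: "real list" and a :: real
    assume h: "length bs > Suc n" "\<forall>b\<in>set bs. b \<ge> 0" "a \<ge> 0"
    have "bs \<noteq> []" using h(1) by auto
    then obtain bs' r where bs: "bs = bs' @ [r]" by (metis rev_exhaust)
    have r0: "r \<ge> 0" using h(2) bs by simp
    have bs'0: "\<forall>b\<in>set bs'. b \<ge> 0" using h(2) bs by simp
    have len: "length bs' > n" using h bs by simp
    define \<psi> where "\<psi> = (\<lambda>K. \<phi> (msum K (?sc r Y)) - \<phi> K)"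
    have rY: "?sc r Y \<in> convex_bodies" using scale_body[OF Yb] .
    have "is_valuation \<psi>" "translation_invariant \<psi>"
      using derived_valuation[OF val ti rY] unfolding \<psi>_def by blast+
    then have gp: "good \<psi> n B" using IHB by blast
    have "diff_ops bs (\<lambda>t. \<phi> (?sc t Y)) a = diff_ops bs' (diff_op r (\<lambda>t. \<phi> (?sc t Y))) a"
      unfolding bs by (rule fun_cong[OF diff_ops_snoc])
    also have "\<dots> = diff_ops bs' (\<lambda>s. \<psi> (?sc s B)) a"
    proof (rule diff_ops_cong[OF _ bs'0 h(3)], intro allI impI)
      fix s :: real assume "s \<ge> 0"
      then show "diff_op r (\<lambda>t. \<phi> (?sc t Y)) s = \<psi> (?sc s B)" using step[of s r] r0 unfolding \<psi>_def by simp
    qed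
    also have "\<dots> = 0" using gp len bs'0 h(3) unfolding good_def by blast
    finally show "diff_ops bs (\<lambda>t. \<phi> (?sc t Y)) a = 0" .
  qed
qed

lemma polyhedron_list:
  fixes P :: "'v::euclidean_space set"
  assumes "polyhedron P" shows "\<exists>L. P = {x. \<forall>p\<in>set L. fst p \<bullet> x \<le> snd p}"
proof -
  obtain F where F: "finite F" "P = \<Inter>F" "\<forall>h\<in>F. \<exists>a b. a \<noteq> 0 \<and> h = {x. a \<bullet> x \<le> b}"
    using assms unfolding polyhedron_def by blast
  have "\<forall>h\<in>F. \<exists>p. h = {x. fst p \<bullet> x \<le> snd p}"
  proof
    fix h assume "h \<in> F"
    then obtain a b where "h = {x. a \<bullet> x \<le> b}" using F(3) by blast
    then show "\<exists>p. h = {x. fst p \<bullet> x \<le> snd p}" by (intro exI[of _ "(a, b)"]) simp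
  qed
  then obtain f where f: "\<forall>h\<in>F. h = {x. fst (f h) \<bullet> x \<le> snd (f h)}" by metis
  obtain xs where xs: "set xs = F" using finite_list[OF F(1)] by blast
  have "x \<in> P \<longleftrightarrow> x \<in> {x. \<forall>p\<in>set (map f xs). fst p \<bullet> x \<le> snd p}" for x
  proof -
    have "x \<in> P \<longleftrightarrow> (\<forall>h\<in>F. x \<in> h)" using F(2) by simp
    also have "\<dots> \<longleftrightarrow> (\<forall>h\<in>F. fst (f h) \<bullet> x \<le> snd (f h))"
    proof
      assume "\<forall>h\<in>F. x \<in> h" then show "\<forall>h\<in>F. fst (f h) \<bullet> x \<le> snd (f h)" using f by blast
    next
      assume a: "\<forall>h\<in>F. fst (f h) \<bullet> x \<le> snd (f h)"
      show "\<forall>h\<in>F. x \<in> h"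
      proof
        fix h assume "h \<in> F" then have eq: "h = {x. fst (f h) \<bullet> x \<le> snd (f h)}" using f by blast
        have "fst (f h) \<bullet> x \<le> snd (f h)" using a \<open>h \<in> F\<close> by blast
        then have "x \<in> {x. fst (f h) \<bullet> x \<le> snd (f h)}" by simp
        then show "x \<in> h" using eq by (rule ssubst[where P="\<lambda>S. x \<in> S", rotated])
      qed
    qed
    also have "\<dots> \<longleftrightarrow> x \<in> {x. \<forall>p\<in>set (map f xs). fst p \<bullet> x \<le> snd p}" using xs by simp
    finally show ?thesis .
  qed
  then show ?thesis by (intro exI[of _ "map f xs"] set_eqI)
qed

lemma unbounded_ray:
  fixes u v :: "'v::euclidean_space"
  assumes "bounded P" "u \<noteq> 0" "\<forall>t\<ge>0. v + t *\<^sub>R u \<in> P"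
  shows False
proof -
  obtain M where M: "\<forall>x\<in>P. norm x \<le> M" using assms(1) unfolding bounded_iff by blast
  define t where "t = (\<bar>M\<bar> + norm v + 1) / norm u"
  have nu: "norm u > 0" using assms(2) by simp
  have t0: "t \<ge> 0" unfolding t_def using nu by simp
  have "norm (t *\<^sub>R u) = \<bar>M\<bar> + norm v + 1" unfolding t_def using nu by simp
  moreover have "norm (t *\<^sub>R u) \<le> norm (v + t *\<^sub>R u) + norm v"
    using norm_triangle_ineq4[of "v + t *\<^sub>R u" v] by simp
  moreover have "norm (v + t *\<^sub>R u) \<le> M" using M assms(3) t0 by blast
  ultimately show False by linarith
qed

lemma max_total:
  assumes "finite S" "S \<noteq> {}" "\<forall>i\<in>S. \<forall>j\<in>S. R i j \<or> R j i" "\<forall>i j k. R i j \<longrightarrow> R j k \<longrightarrow> R i k"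
  shows "\<exists>k\<in>S. \<forall>j\<in>S. R k j"
  using assms
proof (induction S rule: finite_ne_induct)
  case (singleton x) then show ?case by blast
next
  case (insert x F)
  then obtain k where k: "k \<in> F" "\<forall>j\<in>F. R k j" by blast
  show ?case
  proof (cases "R k x")
    case True
    then show ?thesis using k insert.prems by blast
  next
    case False
    then have "R x k" using insert.prems k by blast
    then have "\<forall>j\<in>insert x F. R x j" using k insert.prems by blast
    then show ?thesis by blast
  qed
qed


lemma polytope_good:
  "\<forall>\<phi>::'v::euclidean_space set \<Rightarrow> 'a::ab_group_add. translation_invariant \<phi> \<and> is_valuation \<phi> \<longrightarrow>
     (\<forall>P. polytope P \<and> aff_dim P \<le> int d \<longrightarrow> good \<phi> d P)"
proof (induction d)
  case 0
  show ?case
  proof (intro allI impI, elim conjE)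
    fix \<phi> :: "'v set \<Rightarrow> 'a" and P :: "'v set"
    assume ti: "translation_invariant \<phi>" and val: "is_valuation \<phi>" and pP: "polytope P"
      and ad: "aff_dim P \<le> int 0"
    show "good \<phi> 0 P"
    proof (cases "P = {}")
      case True then show ?thesis by (simp add: good_empty)
    next
      case False
      then have "\<not> aff_dim P < 0" using aff_dim_negative_iff[of P] by blast
      then have "aff_dim P = 0" using ad by linarith
      then obtain p where "P = {p}" using aff_dim_eq_0 by blast
      then show ?thesis using good_sing[OF ti] by simp
    qed
  qed
next
  case (Suc n)
  show ?case
  proof (intro allI impI, elim conjE)
    fix \<phi> :: "'v set \<Rightarrow> 'a" and P :: "'v set"
    assume ti: "translation_invariant \<phi>" and val: "is_valuation \<phi>" and pP: "polytope P"
      and ad: "aff_dim P \<le> int (Suc n)"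
    have IHall: "\<forall>\<psi>::'v set \<Rightarrow> 'a. translation_invariant \<psi> \<and> is_valuation \<psi> \<longrightarrow>
       (\<forall>Q. polytope Q \<and> aff_dim Q \<le> int n \<longrightarrow> good \<psi> n Q)" by (rule Suc.IH)
    have IH: "\<forall>Q. polytope Q \<and> aff_dim Q \<le> int n \<longrightarrow> good \<phi> n Q" using IHall ti val by blast
    show "good \<phi> (Suc n) P"
    proof (cases "P = {}")
      case True then show ?thesis by (simp add: good_empty)
    next
      case False
      then obtain v where vP: "v \<in> P" by blast
      obtain L where L: "P = {x. \<forall>p\<in>set L. fst p \<bullet> x \<le> snd p}"
        using polyhedron_list[OF polytope_imp_polyhedron[OF pP]] by blast
      have inP: "fst p \<bullet> x \<le> snd p" if "x \<in> P" "p \<in> set L" for x p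
        using that L by blast
      define c where "c = (\<lambda>p::'v\<times>real. snd p - fst p \<bullet> v)"
      have c0: "c p \<ge> 0" if "p \<in> set L" for p using inP[OF vP that] unfolding c_def by simp
      define Lp where "Lp = filter (\<lambda>p. c p > 0) L"
      define gf where "gf = (\<lambda>p::'v\<times>real. (1 / c p) *\<^sub>R fst p)"
      define gs where "gs = map gf Lp"
      define hs where "hs = concat (map (\<lambda>gi. map (\<lambda>gj. (gi - gj, (gi - gj) \<bullet> v)) gs) gs)"
      have hs_v: "\<forall>(w,e)\<in>set hs. e = w \<bullet> v" unfolding hs_def by auto
      have pair_in: "(gi - gj, (gi - gj) \<bullet> v) \<in> set hs" if "gi \<in> set gs" "gj \<in> set gs" for gi gj
        unfolding hs_def using that by auto
      have gf_in: "gf p \<in> set gs" if "p \<in> set L" "c p > 0" for p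
        unfolding gs_def Lp_def using that by simp
      have gfu: "gf p \<bullet> u = (fst p \<bullet> u) / c p" for p u unfolding gf_def by simp
      have F1: "fst p \<bullet> x \<le> snd p \<longleftrightarrow> gf p \<bullet> (x - v) \<le> 1" if "c p > 0" for p x
      proof -
        have "gf p \<bullet> (x - v) = (fst p \<bullet> x - fst p \<bullet> v) / c p" unfolding gfu by (simp add: inner_diff_right)
        then have "gf p \<bullet> (x - v) \<le> 1 \<longleftrightarrow> fst p \<bullet> x - fst p \<bullet> v \<le> c p"
          using that by (simp add: pos_divide_le_eq)
        then show ?thesis unfolding c_def by linarith
      qed
      have ray: "False" if "u \<noteq> 0" "\<forall>p\<in>set L. fst p \<bullet> u \<le> 0" for u
      proof (rule unbounded_ray[OF polytope_imp_bounded[OF pP] that(1)], intro allI impI)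
        fix t :: real assume t: "t \<ge> 0"
        have "\<forall>p\<in>set L. fst p \<bullet> (v + t *\<^sub>R u) \<le> snd p"
        proof
          fix p assume p: "p \<in> set L"
          have "fst p \<bullet> v \<le> snd p" using inP[OF vP p] .
          moreover have "t * (fst p \<bullet> u) \<le> 0" using that(2) p t by (simp add: mult_nonneg_nonpos)
          ultimately show "fst p \<bullet> (v + t *\<^sub>R u) \<le> snd p" by (simp add: inner_add_right)
        qed
        then show "v + t *\<^sub>R u \<in> P" using L by blast
      qed
      show ?thesis
      proof (rule good_cells[OF ti val IH pP ad, of hs], rule ballI)
        fix C assume C: "C \<in> cells hs"
        have Cpoly: "polyhedron C" using cells_props[OF C] by blast
        have Csides: "\<forall>(w,e)\<in>set hs. C \<subseteq> {x. w \<bullet> x \<le> e} \<or> C \<subseteq> {x. w \<bullet> x \<ge> e}" using cells_props[OF C] by blast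
        have vC: "v \<in> C" using cells_cone[OF hs_v C] by blast
        have Ccone: "\<forall>x\<in>C. \<forall>t\<ge>0. v + t *\<^sub>R (x - v) \<in> C" using cells_cone[OF hs_v C] by blast
        define Q where "Q = P \<inter> C"
        have pQ: "polytope Q" unfolding Q_def using polytope_Int_polyhedron pP Cpoly by blast
        have adQ: "aff_dim Q \<le> aff_dim P" unfolding Q_def by (rule aff_dim_subset) blast
        show "good \<phi> (Suc n) (P \<inter> C)"
        proof (cases "aff_dim Q \<le> int n")
          case True
          then have "good \<phi> n Q" using IH pQ by blast
          then show ?thesis unfolding Q_def by (rule good_mono) simp
        next
          case False
          have vQ: "v \<in> Q" unfolding Q_def using vP vC by blast
          have "\<exists>y\<in>Q. y \<noteq> v"
          proof (rule ccontr)
            assume "\<not> (\<exists>y\<in>Q. y \<noteq> v)"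
            then have "Q = {v}" using vQ by blast
            then have "aff_dim Q = 0" by simp
            then show False using False by simp
          qed
          then obtain y where yQ: "y \<in> Q" "y \<noteq> v" by blast
          have gsne: "gs \<noteq> []"
          proof
            assume "gs = []"
            then have "Lp = []" unfolding gs_def by simp
            then have cz: "\<not> c p > 0" if "p \<in> set L" for p using that unfolding Lp_def filter_empty_conv by blast
            have "\<forall>p\<in>set L. fst p \<bullet> (y - v) \<le> 0"
            proof
              fix p assume p: "p \<in> set L"
              have "fst p \<bullet> y \<le> snd p" using inP[OF _ p] yQ(1) unfolding Q_def by blast
              moreover have "c p = 0" using cz[OF p] c0[OF p] by linarith
              ultimately show "fst p \<bullet> (y - v) \<le> 0" unfolding c_def by (simp add: inner_diff_right)
            qed
            then show False using ray[of "y - v"] yQ(2) by simp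
          qed
          define R where "R = (\<lambda>i j::'v. \<forall>x\<in>C. j \<bullet> (x - v) \<le> i \<bullet> (x - v))"
          have tot: "\<forall>i\<in>set gs. \<forall>j\<in>set gs. R i j \<or> R j i"
          proof (intro ballI)
            fix i j assume ij: "i \<in> set gs" "j \<in> set gs"
            have "(i - j, (i - j) \<bullet> v) \<in> set hs" by (rule pair_in[OF ij])
            then have "C \<subseteq> {x. (i - j) \<bullet> x \<le> (i - j) \<bullet> v} \<or> C \<subseteq> {x. (i - j) \<bullet> x \<ge> (i - j) \<bullet> v}"
              using Csides by fastforce
            then show "R i j \<or> R j i"
            proof
              assume a: "C \<subseteq> {x. (i - j) \<bullet> x \<le> (i - j) \<bullet> v}"
              have "R j i" unfolding R_def
              proof
                fix x assume "x \<in> C"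
                then have "(i - j) \<bullet> x \<le> (i - j) \<bullet> v" using a by blast
                then show "i \<bullet> (x - v) \<le> j \<bullet> (x - v)" by (simp add: inner_diff_left inner_diff_right)
              qed
              then show ?thesis by blast
            next
              assume a: "C \<subseteq> {x. (i - j) \<bullet> x \<ge> (i - j) \<bullet> v}"
              have "R i j" unfolding R_def
              proof
                fix x assume "x \<in> C"
                then have "(i - j) \<bullet> x \<ge> (i - j) \<bullet> v" using a by blast
                then show "j \<bullet> (x - v) \<le> i \<bullet> (x - v)" by (simp add: inner_diff_left inner_diff_right)
              qed
              then show ?thesis by blast
            qed
          qed
          have trans: "\<forall>i j k. R i j \<longrightarrow> R j k \<longrightarrow> R i k" unfolding R_def by (meson order_trans)
          obtain k where k: "k \<in> set gs" "\<forall>j\<in>set gs. R k j"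
            using max_total[of "set gs" R] tot trans gsne by auto
          obtain pk where pk: "pk \<in> set Lp" "k = gf pk" using k(1) unfolding gs_def by auto
          have pkL: "pk \<in> set L" "c pk > 0" using pk(1) unfolding Lp_def by auto
          have kdom: "j \<bullet> (x - v) \<le> k \<bullet> (x - v)" if "j \<in> set gs" "x \<in> C" for j x
            using k(2) that unfolding R_def by blast
          define B where "B = Q \<inter> {x. k \<bullet> x = 1 + k \<bullet> v}"
          have kB: "k \<bullet> (z - v) = 1" if "z \<in> B" for z using that unfolding B_def by (simp add: inner_diff_right)
          have decomp: "\<exists>\<tau> z. 0 \<le> \<tau> \<and> \<tau> \<le> 1 \<and> z \<in> B \<and> x = v + \<tau> *\<^sub>R (z - v)" if "x \<in> Q" "x \<noteq> v" for x
          proof -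
            define u where "u = x - v"
            have xC: "x \<in> C" and xP: "x \<in> P" using that unfolding Q_def by auto
            have ku: "k \<bullet> u > 0"
            proof (rule ccontr)
              assume "\<not> k \<bullet> u > 0"
              then have kle: "k \<bullet> u \<le> 0" by simp
              have "\<forall>p\<in>set L. fst p \<bullet> u \<le> 0"
              proof
                fix p assume p: "p \<in> set L"
                have px: "fst p \<bullet> x \<le> snd p" by (rule inP[OF xP p])
                show "fst p \<bullet> u \<le> 0"
                proof (cases "c p > 0")
                  case True
                  have "gf p \<bullet> u \<le> k \<bullet> u" using kdom[OF gf_in[OF p True] xC] unfolding u_def .
                  then have "(fst p \<bullet> u) / c p \<le> 0" using kle unfolding gfu by simp
                  then show ?thesis using True by (simp add: divide_le_0_iff)
                next
                  case False
                  then have "c p = 0" using c0[OF p] by linarith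
                  then show ?thesis using px unfolding u_def c_def by (simp add: inner_diff_right)
                qed
              qed
              then show False using ray[of u] that(2) unfolding u_def by simp
            qed
            define \<tau> where "\<tau> = k \<bullet> u"
            have tpos: "\<tau> > 0" using ku \<tau>_def by simp
            define z where "z = v + (1 / \<tau>) *\<^sub>R u"
            have zC: "z \<in> C" unfolding z_def u_def using Ccone xC tpos by simp
            have zv: "z - v = (1 / \<tau>) *\<^sub>R u" unfolding z_def by simp
            have zk: "k \<bullet> (z - v) = 1" unfolding zv using tpos \<tau>_def by simp
            have "\<forall>p\<in>set L. fst p \<bullet> z \<le> snd p"
            proof
              fix p assume p: "p \<in> set L"
              have px: "fst p \<bullet> x \<le> snd p" by (rule inP[OF xP p])
              show "fst p \<bullet> z \<le> snd p"
              proof (cases "c p > 0")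
                case True
                have "gf p \<bullet> u \<le> k \<bullet> u" using kdom[OF gf_in[OF p True] xC] unfolding u_def .
                then have "gf p \<bullet> u / \<tau> \<le> 1" using tpos \<tau>_def by simp
                then have "gf p \<bullet> (z - v) \<le> 1" unfolding zv by simp
                then show ?thesis using F1[OF True] by simp
              next
                case False
                then have "c p = 0" using c0[OF p] by linarith
                then have "fst p \<bullet> u \<le> 0" using px unfolding u_def c_def by (simp add: inner_diff_right)
                then have "fst p \<bullet> (z - v) \<le> 0" unfolding zv using tpos by (simp add: divide_le_0_iff)
                then show ?thesis using \<open>c p = 0\<close> unfolding c_def by (simp add: inner_diff_right)
              qed
            qed
            then have zP: "z \<in> P" using L by blast
            have zB: "z \<in> B" unfolding B_def Q_def using zC zP zk by (simp add: inner_diff_right)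
            have t1: "\<tau> \<le> 1" using F1[OF pkL(2), of x] inP[OF xP pkL(1)] pk(2) unfolding \<tau>_def u_def by simp
            have "x = v + \<tau> *\<^sub>R (z - v)" unfolding zv u_def using tpos by simp
            then show ?thesis using tpos t1 zB by (intro exI[of _ \<tau>] exI[of _ z]) simp
          qed
          have BQ: "B \<subseteq> Q" unfolding B_def by blast
          have cvxQ: "convex Q" using pQ polytope_imp_convex by blast
          have Qmem: "x \<in> Q \<longleftrightarrow> (\<exists>\<tau> z. 0 \<le> \<tau> \<and> \<tau> \<le> 1 \<and> z \<in> B \<and> x = v + \<tau> *\<^sub>R (z - v))" for x
          proof
            assume xQ: "x \<in> Q"
            show "\<exists>\<tau> z. 0 \<le> \<tau> \<and> \<tau> \<le> 1 \<and> z \<in> B \<and> x = v + \<tau> *\<^sub>R (z - v)"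
            proof (cases "x = v")
              case True
              obtain \<tau> z where "z \<in> B" using decomp[OF yQ] by blast
              then show ?thesis using True by (intro exI[of _ 0] exI[of _ z]) simp
            next
              case False then show ?thesis using decomp[OF xQ False] by blast
            qed
          next
            assume "\<exists>\<tau> z. 0 \<le> \<tau> \<and> \<tau> \<le> 1 \<and> z \<in> B \<and> x = v + \<tau> *\<^sub>R (z - v)"
            then obtain \<tau> z where h: "0 \<le> \<tau>" "\<tau> \<le> 1" "z \<in> B" "x = v + \<tau> *\<^sub>R (z - v)" by blast
            have "x = (1 - \<tau>) *\<^sub>R v + \<tau> *\<^sub>R z" using h(4) by (simp add: algebra_simps)
            moreover have "z \<in> Q" using h(3) BQ by blast
            ultimately show "x \<in> Q" using convexD[OF cvxQ vQ \<open>z \<in> Q\<close>, of "1 - \<tau>" \<tau>] h by simp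
          qed
          have Bne: "B \<noteq> {}" using decomp[OF yQ] by blast
          have pB: "polytope B" unfolding B_def using pQ polytope_Int_polyhedron polyhedron_hyperplane by blast
          have h1: "affine hull B \<subseteq> {x. k \<bullet> x = 1 + k \<bullet> v}"
          proof (rule hull_minimal)
            show "B \<subseteq> {x. k \<bullet> x = 1 + k \<bullet> v}" unfolding B_def by blast
            show "affine {x. k \<bullet> x = 1 + k \<bullet> v}" by (rule affine_hyperplane)
          qed
          have h2: "v \<in> affine hull Q" by (rule hull_inc[OF vQ])
          have h3: "affine hull B \<subseteq> affine hull Q" by (rule hull_mono[OF BQ])
          have "v \<notin> affine hull B" using h1 by auto
          then have "affine hull B \<subset> affine hull Q" using h2 h3 by blast
          then have "aff_dim B < aff_dim Q" by (rule aff_dim_psubset)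
          then have adB: "aff_dim B \<le> int n" using adQ ad by linarith
          define B' where "B' = (\<lambda>x. - v + x) ` B"
          have pB': "polytope B'" unfolding B'_def using pB polytope_translation_eq[of "-v" B] by simp
          have adB': "aff_dim B' \<le> int n" unfolding B'_def using adB aff_dim_translation_eq[of "-v" B] by simp
          have B'b: "B' \<in> convex_bodies" using polytope_body[OF pB'] Bne unfolding B'_def by blast
          have gB': "\<forall>z\<in>B'. k \<bullet> z = 1"
          proof
            fix z assume "z \<in> B'"
            then obtain b where b: "b \<in> B" "z = - v + b" unfolding B'_def by blast
            then have zb: "z = b - v" by simp
            show "k \<bullet> z = 1" unfolding zb by (rule kB[OF b(1)])
          qed
          have IHB: "\<forall>\<psi>::'v set \<Rightarrow> 'a. translation_invariant \<psi> \<and> is_valuation \<psi> \<longrightarrow> good \<psi> n B'"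
            using IHall pB' adB' by blast
          define Y where "Y = {\<tau> *\<^sub>R z | \<tau> z. 0 \<le> \<tau> \<and> \<tau> \<le> 1 \<and> z \<in> B'}"
          have gY: "good \<phi> (Suc n) Y" by (rule good_pyramid[OF ti val IHB B'b gB' Y_def])
          have Yb: "Y \<in> convex_bodies" by (rule pyramid_body[OF B'b Y_def])
          have QY: "Q = (\<lambda>x. v + x) ` Y"
          proof (rule set_eqI, rule iffI)
            fix x assume "x \<in> Q"
            then obtain \<tau> z where h: "0 \<le> \<tau>" "\<tau> \<le> 1" "z \<in> B" "x = v + \<tau> *\<^sub>R (z - v)" using Qmem by blast
            have "- v + z \<in> B'" unfolding B'_def using h(3) by (rule imageI)
            then have "\<tau> *\<^sub>R (- v + z) \<in> Y" unfolding Y_def using h(1,2) by blast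
            moreover have "x = v + \<tau> *\<^sub>R (- v + z)" using h(4) by simp
            ultimately show "x \<in> (\<lambda>x. v + x) ` Y" by (rule rev_image_eqI)
          next
            fix x assume "x \<in> (\<lambda>x. v + x) ` Y"
            then obtain y where y: "y \<in> Y" "x = v + y" by blast
            then obtain \<tau> z' where h: "0 \<le> \<tau>" "\<tau> \<le> 1" "z' \<in> B'" "y = \<tau> *\<^sub>R z'" unfolding Y_def by blast
            then obtain z where z: "z \<in> B" "z' = - v + z" unfolding B'_def by blast
            have "x = v + \<tau> *\<^sub>R (z - v)" using y h z by simp
            then show "x \<in> Q" using Qmem h z by blast
          qed
          have "good \<phi> (Suc n) ((\<lambda>x. v + x) ` Y)" by (rule good_translate[OF ti Yb gY])
          then show ?thesis using QY unfolding Q_def by simp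
        qed
      qed
    qed
  qed
qed

lemma finite_net:
  fixes X :: "'v::euclidean_space set"
  assumes "compact X" "e > 0"
  shows "\<exists>S. finite S \<and> S \<subseteq> X \<and> (\<forall>x\<in>X. \<exists>s\<in>S. dist x s < e)"
proof -
  have cov: "X \<subseteq> (\<Union>c\<in>X. ball c e)"
  proof
    fix x assume "x \<in> X"
    moreover have "x \<in> ball x e" using assms(2) by simp
    ultimately show "x \<in> (\<Union>c\<in>X. ball c e)" by blast
  qed
  obtain C' where C': "C' \<subseteq> X" "finite C'" "X \<subseteq> (\<Union>c\<in>C'. ball c e)"
    using compactE_image[OF assms(1), of X "\<lambda>c. ball c e"] cov by blast
  have "\<forall>x\<in>X. \<exists>s\<in>C'. dist x s < e"
  proof
    fix x assume "x \<in> X"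
    then obtain s where "s \<in> C'" "x \<in> ball s e" using C'(3) by blast
    then show "\<exists>s\<in>C'. dist x s < e" by (metis dist_commute mem_ball)
  qed
  then show ?thesis using C' by blast
qed

lemma hd_le:
  fixes K L :: "'v::euclidean_space set"
  assumes "K \<noteq> {}" "L \<noteq> {}" "\<forall>x\<in>K. \<exists>y\<in>L. dist x y \<le> \<delta>" "\<forall>y\<in>L. \<exists>x\<in>K. dist y x \<le> \<delta>"
  shows "hausdorff_dist K L \<le> \<delta>"
proof -
  have a: "(SUP x\<in>K. setdist {x} L) \<le> \<delta>"
  proof (rule cSUP_least[OF assms(1)])
    fix x assume "x \<in> K"
    then obtain y where y: "y \<in> L" "dist x y \<le> \<delta>" using assms(3) by blast
    have "setdist {x} L \<le> dist x y" by (rule setdist_le_dist) (use y in auto)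
    then show "setdist {x} L \<le> \<delta>" using y by linarith
  qed
  have b: "(SUP y\<in>L. setdist {y} K) \<le> \<delta>"
  proof (rule cSUP_least[OF assms(2)])
    fix y assume "y \<in> L"
    then obtain x where x: "x \<in> K" "dist y x \<le> \<delta>" using assms(4) by blast
    have "setdist {y} K \<le> dist y x" by (rule setdist_le_dist) (use x in auto)
    then show "setdist {y} K \<le> \<delta>" using x by linarith
  qed
  show ?thesis unfolding hausdorff_dist_def using a b by simp
qed

lemma cont_seq:
  fixes \<phi> :: "'v::euclidean_space set \<Rightarrow> 'a::topological_space"
  assumes "continuous_on_bodies \<phi>" "K \<in> convex_bodies" "\<forall>n. L n \<in> convex_bodies"
    "\<forall>e>0. eventually (\<lambda>n. hausdorff_dist K (L n) < e) sequentially"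
  shows "(\<lambda>n. \<phi> (L n)) \<longlonglongrightarrow> \<phi> K"
proof (rule topological_tendstoI)
  fix U assume U: "open U" "\<phi> K \<in> U"
  then obtain e where e: "e > 0" "\<forall>L\<in>convex_bodies. hausdorff_dist K L < e \<longrightarrow> \<phi> L \<in> U"
    using assms(1,2) unfolding continuous_on_bodies_def by blast
  have "eventually (\<lambda>n. hausdorff_dist K (L n) < e) sequentially" using assms(4) e(1) by blast
  then show "eventually (\<lambda>n. \<phi> (L n) \<in> U) sequentially"
  proof (rule eventually_mono)
    fix n assume "hausdorff_dist K (L n) < e"
    then show "\<phi> (L n) \<in> U" using e(2) assms(3) by blast
  qed
qed

lemma eventually_small:
  fixes t e :: real
  assumes "t \<ge> 0" "e > 0"
  shows "eventually (\<lambda>n. t / (real n + 1) < e) sequentially"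
proof -
  obtain N :: nat where N: "t / e < real N" using reals_Archimedean2 by blast
  show ?thesis unfolding eventually_sequentially
  proof (intro exI[of _ N] allI impI)
    fix n assume "n \<ge> N"
    then have "t / e < real n + 1" using N by linarith
    then have "t < e * (real n + 1)" using assms(2) by (simp add: divide_less_eq mult.commute)
    then show "t / (real n + 1) < e" by (simp add: divide_less_eq mult.commute)
  qed
qed


theorem theorem4p1:
  fixes \<phi> :: "'v::euclidean_space set \<Rightarrow> 'a::{topological_ab_group_add, t2_space}"
    and X :: "'v set" and d :: nat and bs :: "real list" and a :: real
  assumes "continuous_on_bodies \<phi>"
    and "translation_invariant \<phi>"
    and "is_valuation \<phi>"
    and "X \<in> convex_bodies"
    and "aff_dim X = int d"
    and "length bs = d + 1"
    and "\<forall>b\<in>set bs. b \<ge> 0"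
    and "a \<ge> 0"
  shows "diff_ops bs (\<lambda>t. \<phi> ((\<lambda>x. t *\<^sub>R x) ` X)) a = 0"
proof -
  note cont = assms(1) and ti = assms(2) and val = assms(3) and Xb = assms(4)
  have kX: "compact X" and cX: "convex X" and neX: "X \<noteq> {}" using Xb unfolding convex_bodies_def by auto
  have "\<forall>n::nat. \<exists>S. finite S \<and> S \<subseteq> X \<and> (\<forall>x\<in>X. \<exists>s\<in>S. dist x s < 1 / (real n + 1))"
  proof
    fix n :: nat
    show "\<exists>S. finite S \<and> S \<subseteq> X \<and> (\<forall>x\<in>X. \<exists>s\<in>S. dist x s < 1 / (real n + 1))"
      by (rule finite_net[OF kX]) simp
  qed
  then obtain S where S: "\<And>n. finite (S n)" "\<And>n. S n \<subseteq> X" "\<And>n. \<forall>x\<in>X. \<exists>s\<in>S n. dist x s < 1 / (real n + 1)"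
    by metis
  define P where "P = (\<lambda>n. convex hull (S n))"
  have pP: "polytope (P n)" for n unfolding P_def polytope_def using S(1) by blast
  have PX: "P n \<subseteq> X" for n unfolding P_def by (rule hull_minimal[where S=convex, OF S(2) cX])
  have SP: "S n \<subseteq> P n" for n unfolding P_def by (rule hull_subset)
  have neP: "P n \<noteq> {}" for n
  proof -
    obtain x where "x \<in> X" using neX by blast
    then obtain s where "s \<in> S n" using S(3)[of n] by blast
    then show ?thesis using SP by blast
  qed
  have adP: "aff_dim (P n) \<le> int d" for n using aff_dim_subset[OF PX[of n]] assms(5) by simp
  have gP: "good \<phi> d (P n)" for n using polytope_good[of d] ti val pP adP by blast
  have zero: "diff_ops bs (\<lambda>t. \<phi> ((\<lambda>x. t *\<^sub>R x) ` P n)) a = 0" for n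
    using gP[of n] assms(6,7,8) unfolding good_def by simp
  have conv: "\<forall>t\<ge>0. (\<lambda>n. \<phi> ((\<lambda>x. t *\<^sub>R x) ` P n)) \<longlonglongrightarrow> \<phi> ((\<lambda>x. t *\<^sub>R x) ` X)"
  proof (intro allI impI)
    fix t :: real assume t: "t \<ge> 0"
    have hd: "hausdorff_dist ((\<lambda>x. t *\<^sub>R x) ` X) ((\<lambda>x. t *\<^sub>R x) ` P n) \<le> t / (real n + 1)" for n
    proof (rule hd_le)
      show "(\<lambda>x. t *\<^sub>R x) ` X \<noteq> {}" using neX by simp
      show "(\<lambda>x. t *\<^sub>R x) ` P n \<noteq> {}" using neP by simp
      show "\<forall>x\<in>(\<lambda>x. t *\<^sub>R x) ` X. \<exists>y\<in>(\<lambda>x. t *\<^sub>R x) ` P n. dist x y \<le> t / (real n + 1)"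
      proof
        fix x assume "x \<in> (\<lambda>x. t *\<^sub>R x) ` X"
        then obtain x' where x': "x' \<in> X" "x = t *\<^sub>R x'" by blast
        then obtain s where s: "s \<in> S n" "dist x' s < 1 / (real n + 1)" using S(3)[of n] by blast
        have "dist x (t *\<^sub>R s) = t * dist x' s"
        proof -
          have "dist x (t *\<^sub>R s) = norm (t *\<^sub>R (x' - s))" unfolding x'(2) dist_norm by (simp add: scaleR_diff_right)
          also have "\<dots> = t * dist x' s" using t by (simp add: dist_norm)
          finally show ?thesis .
        qed
        also have "\<dots> \<le> t * (1 / (real n + 1))" using mult_left_mono[OF less_imp_le[OF s(2)] t] .
        finally have "dist x (t *\<^sub>R s) \<le> t / (real n + 1)" by simp
        moreover have "t *\<^sub>R s \<in> (\<lambda>x. t *\<^sub>R x) ` P n" using SP s(1) by blast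
        ultimately show "\<exists>y\<in>(\<lambda>x. t *\<^sub>R x) ` P n. dist x y \<le> t / (real n + 1)" by blast
      qed
      show "\<forall>y\<in>(\<lambda>x. t *\<^sub>R x) ` P n. \<exists>x\<in>(\<lambda>x. t *\<^sub>R x) ` X. dist y x \<le> t / (real n + 1)"
      proof
        fix y assume "y \<in> (\<lambda>x. t *\<^sub>R x) ` P n"
        then have "y \<in> (\<lambda>x. t *\<^sub>R x) ` X" using PX by blast
        moreover have "dist y y \<le> t / (real n + 1)" using t by simp
        ultimately show "\<exists>x\<in>(\<lambda>x. t *\<^sub>R x) ` X. dist y x \<le> t / (real n + 1)" by blast
      qed
    qed
    show "(\<lambda>n. \<phi> ((\<lambda>x. t *\<^sub>R x) ` P n)) \<longlonglongrightarrow> \<phi> ((\<lambda>x. t *\<^sub>R x) ` X)"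
    proof (rule cont_seq[OF cont])
      show "(\<lambda>x. t *\<^sub>R x) ` X \<in> convex_bodies" by (rule scale_body[OF Xb])
      show "\<forall>n. (\<lambda>x. t *\<^sub>R x) ` P n \<in> convex_bodies" using scale_body polytope_body pP neP by blast
      show "\<forall>e>0. eventually (\<lambda>n. hausdorff_dist ((\<lambda>x. t *\<^sub>R x) ` X) ((\<lambda>x. t *\<^sub>R x) ` P n) < e) sequentially"
      proof (intro allI impI)
        fix e :: real assume "e > 0"
        then have "eventually (\<lambda>n. t / (real n + 1) < e) sequentially" by (rule eventually_small[OF t])
        then show "eventually (\<lambda>n. hausdorff_dist ((\<lambda>x. t *\<^sub>R x) ` X) ((\<lambda>x. t *\<^sub>R x) ` P n) < e) sequentially"
        proof (rule eventually_mono)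
          fix n assume "t / (real n + 1) < e"
          then show "hausdorff_dist ((\<lambda>x. t *\<^sub>R x) ` X) ((\<lambda>x. t *\<^sub>R x) ` P n) < e" using hd[of n] by linarith
        qed
      qed
    qed
  qed
  have "(\<lambda>n. diff_ops bs (\<lambda>t. \<phi> ((\<lambda>x. t *\<^sub>R x) ` P n)) a) \<longlonglongrightarrow> diff_ops bs (\<lambda>t. \<phi> ((\<lambda>x. t *\<^sub>R x) ` X)) a"
    by (rule diff_ops_tendsto[OF conv assms(7,8)])
  then have "(\<lambda>n. 0) \<longlonglongrightarrow> diff_ops bs (\<lambda>t. \<phi> ((\<lambda>x. t *\<^sub>R x) ` X)) a" using zero by simp
  then show ?thesis using LIMSEQ_unique[OF tendsto_const] by metis
qed

end
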